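(* For every $\lambda$ and all $(x,p)$ with pairwise distinct $x_i$, $$\mathbf{e}^T(\lambda-L)^\vee\mathbf{e}=\operatorname{tr}\big((\lambda-L)^\vee\big)=\Delta'(\lambda),$$ and moreover $\{\operatorname{tr}L,\mathcal{G}(\lambda)\}_0=\{\operatorname{tr}L,\mathcal{E}(\lambda)\}_0=\Delta'(\lambda)$, where $\mathcal{G}(\lambda)=\operatorname{tr}(X(\lambda-L)^\vee)$ and $\mathcal{E}(\lambda)=\mathbf{x}^T(\lambda-L)^\vee\mathbf{e}$.
   Context: Fix $n\ge1$. On the open subset of $\mathbb{R}^{2n}$ with coordinates $(x_1,\dots,x_n,p_1,\dots,p_n)$ where the $x_i$ are pairwise distinct, let $L$ be the $n\times n$ matrix with $L_{ij}=p_i\delta_{ij}+(1-\delta_{ij})/(x_i-x_j)$ and $X=\mathrm{diag}(x_1,\dots,x_n)$. $A^\vee$ denotes the adjugate of a square matrix $A$. $\Delta(\lambda)=\det(\lambda\,\mathrm{Id}-L)$, $\Delta'(\lambda)=\frac{d}{d\lambda}\Delta(\lambda)$, $\mathbf{e}=(1,\dots,1)^T$, $\mathbf{x}=(x_1,\dots,x_n)^T$. $\{\cdot,\cdot\}_0$ is the canonical bracket with $\{p_i,x_j\}_0=\delta_{ij}$, $\{x_i,x_j\}_0=\{p_i,p_j\}_0=0$. *)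

theory Defs
  imports "HOL-Analysis.Analysis"
begin

definition Lmat :: "real^'n \<Rightarrow> real^'n \<Rightarrow> real^'n^'n" where
  "Lmat x p = (\<chi> i j. if i = j then p $ i else 1 / (x $ i - x $ j))"

definition Xmat :: "real^'n \<Rightarrow> real^'n^'n" where
  "Xmat x = (\<chi> i j. if i = j then x $ i else 0)"

text \<open>Adjugate: (adj A)_{ij} is the (j,i) cofactor of A, i.e. the determinant of A
  with row j replaced by the i-th standard basis vector.\<close>
definition adjugate :: "real^'n^'n \<Rightarrow> real^'n^'n" where
  "adjugate A = (\<chi> i j. det (\<chi> k. if k = j then axis i 1 else A $ k))"

definition Delta :: "real^'n \<Rightarrow> real^'n \<Rightarrow> real \<Rightarrow> real" where
  "Delta x p lam = det (mat lam - Lmat x p)"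

definition Delta' :: "real^'n \<Rightarrow> real^'n \<Rightarrow> real \<Rightarrow> real" where
  "Delta' x p lam = deriv (Delta x p) lam"

definition pd_x :: "'n \<Rightarrow> ((real^'n) \<times> (real^'n) \<Rightarrow> real) \<Rightarrow> (real^'n) \<times> (real^'n) \<Rightarrow> real" where
  "pd_x i f z = deriv (\<lambda>t. f (fst z + t *\<^sub>R axis i 1, snd z)) 0"

definition pd_p :: "'n \<Rightarrow> ((real^'n) \<times> (real^'n) \<Rightarrow> real) \<Rightarrow> (real^'n) \<times> (real^'n) \<Rightarrow> real" where
  "pd_p i f z = deriv (\<lambda>t. f (fst z, snd z + t *\<^sub>R axis i 1)) 0"

text \<open>Canonical bracket with {p_i, x_j}_0 = delta_ij.\<close>
definition bracket0 :: "((real^'n) \<times> (real^'n) \<Rightarrow> real) \<Rightarrow> ((real^'n) \<times> (real^'n) \<Rightarrow> real)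
    \<Rightarrow> (real^'n) \<times> (real^'n) \<Rightarrow> real" where
  "bracket0 f g z = (\<Sum>i\<in>UNIV. pd_p i f z * pd_x i g z - pd_x i f z * pd_p i g z)"

definition trL :: "(real^'n) \<times> (real^'n) \<Rightarrow> real" where
  "trL z = trace (Lmat (fst z) (snd z))"

definition calG :: "real \<Rightarrow> (real^'n) \<times> (real^'n) \<Rightarrow> real" where
  "calG lam z = trace (Xmat (fst z) ** adjugate (mat lam - Lmat (fst z) (snd z)))"

definition calE :: "real \<Rightarrow> (real^'n) \<times> (real^'n) \<Rightarrow> real" where
  "calE lam z = fst z \<bullet> (adjugate (mat lam - Lmat (fst z) (snd z)) *v vec 1)"

end

theory Submission
  imports Defs
begin

lemma prod_split_at:
  fixes f :: "'n::finite \<Rightarrow> real"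
  shows "prod f UNIV = f j * prod f (UNIV - {j})"
  by (simp add: prod.remove)

lemma det_row_axis:
  fixes M :: "real^'n^'n"
  shows "det (\<chi> r. if r = j then axis i 1 else M $ r) =
    (\<Sum>\<sigma>\<in>{\<sigma>. \<sigma> permutes (UNIV::'n set)}. of_int (sign \<sigma>) *
       (if \<sigma> j = i then (\<Prod>r\<in>UNIV-{j}. M$r$\<sigma> r) else 0))"
  unfolding det_def
proof (rule sum.cong[OF refl])
  fix \<sigma> :: "'n \<Rightarrow> 'n"
  have "(\<Prod>r\<in>UNIV. (\<chi> r. if r = j then axis i 1 else M $ r) $ r $ \<sigma> r)
      = (\<chi> r. if r = j then axis i 1 else M $ r) $ j $ \<sigma> j *
        (\<Prod>r\<in>UNIV-{j}. (\<chi> r. if r = j then axis i 1 else M $ r) $ r $ \<sigma> r)"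
    by (rule prod_split_at)
  also have "\<dots> = (if \<sigma> j = i then (\<Prod>r\<in>UNIV-{j}. M$r$\<sigma> r) else 0)"
    by (simp add: axis_def)
  finally show "of_int (sign \<sigma>) * (\<Prod>r\<in>UNIV. (\<chi> r. if r = j then axis i 1 else M $ r) $ r $ \<sigma> r)
    = of_int (sign \<sigma>) * (if \<sigma> j = i then (\<Prod>r\<in>UNIV-{j}. M$r$\<sigma> r) else 0)" by simp
qed

lemma adj_entry:
  fixes M :: "real^'n^'n"
  shows "adjugate M $ k $ i = (\<Sum>\<sigma>\<in>{\<sigma>. \<sigma> permutes (UNIV::'n set)}. of_int (sign \<sigma>) *
       (if \<sigma> i = k then (\<Prod>r\<in>UNIV-{i}. M$r$\<sigma> r) else 0))"
  unfolding adjugate_def by (simp add: det_row_axis)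

lemma adj_R:
  fixes M :: "real^'n^'n"
  shows "(\<Sum>k\<in>UNIV. M$i$k * adjugate M $ k $ i) = det M"
proof -
  have "(\<Sum>k\<in>UNIV. M$i$k * adjugate M $ k $ i)
     = (\<Sum>\<sigma>\<in>{\<sigma>. \<sigma> permutes (UNIV::'n set)}. of_int (sign \<sigma>) *
         (\<Sum>k\<in>UNIV. (if \<sigma> i = k then M$i$k * (\<Prod>r\<in>UNIV-{i}. M$r$\<sigma> r) else 0)))"
    unfolding adj_entry sum_distrib_left
    by (subst sum.swap) (auto intro!: sum.cong)
  also have "\<dots> = (\<Sum>\<sigma>\<in>{\<sigma>. \<sigma> permutes (UNIV::'n set)}. of_int (sign \<sigma>) *
         (\<Prod>r\<in>UNIV. M$r$\<sigma> r))"
    by (intro sum.cong refl) (simp add: prod_split_at[of _ i])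
  finally show ?thesis unfolding det_def .
qed

lemma adj_C:
  fixes M :: "real^'n^'n"
  shows "(\<Sum>i\<in>UNIV. adjugate M $ k $ i * M$i$k) = det M"
proof -
  have "(\<Sum>i\<in>UNIV. adjugate M $ k $ i * M$i$k)
     = (\<Sum>\<sigma>\<in>{\<sigma>. \<sigma> permutes (UNIV::'n set)}. of_int (sign \<sigma>) *
         (\<Sum>i\<in>UNIV. (if \<sigma> i = k then M$i$\<sigma> i * (\<Prod>r\<in>UNIV-{i}. M$r$\<sigma> r) else 0)))"
    unfolding adj_entry sum_distrib_left sum_distrib_right
    by (subst sum.swap) (auto intro!: sum.cong)
  also have "\<dots> = (\<Sum>\<sigma>\<in>{\<sigma>. \<sigma> permutes (UNIV::'n set)}. of_int (sign \<sigma>) *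
         (\<Prod>r\<in>UNIV. M$r$\<sigma> r))"
  proof (intro sum.cong refl)
    fix \<sigma> assume "\<sigma> \<in> {\<sigma>. \<sigma> permutes (UNIV::'n set)}"
    then have s: "\<sigma> permutes (UNIV::'n set)" by simp
    have "(\<Sum>i\<in>UNIV. (if \<sigma> i = k then M$i$\<sigma> i * (\<Prod>r\<in>UNIV-{i}. M$r$\<sigma> r) else 0))
       = (\<Sum>i\<in>UNIV. (if i = inv \<sigma> k then (\<Prod>r\<in>UNIV. M$r$\<sigma> r) else 0))"
    proof (intro sum.cong refl)
      fix i
      have e: "\<sigma> i = k \<longleftrightarrow> i = inv \<sigma> k" using s by (metis permutes_inverses(1) permutes_inverses(2))
      show "(if \<sigma> i = k then M$i$\<sigma> i * (\<Prod>r\<in>UNIV-{i}. M$r$\<sigma> r) else 0)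
          = (if i = inv \<sigma> k then (\<Prod>r\<in>UNIV. M$r$\<sigma> r) else 0)"
        unfolding e by (simp add: prod_split_at[of _ i])
    qed
    also have "\<dots> = (\<Prod>r\<in>UNIV. M$r$\<sigma> r)" by simp
    finally show "of_int (sign \<sigma>) * (\<Sum>i\<in>UNIV. (if \<sigma> i = k then M$i$\<sigma> i * (\<Prod>r\<in>UNIV-{i}. M$r$\<sigma> r) else 0))
       = of_int (sign \<sigma>) * (\<Prod>r\<in>UNIV. M$r$\<sigma> r)" by simp
  qed
  finally show ?thesis unfolding det_def .
qed


lemma M_entry: "(mat lam - Lmat x p) $ i $ k = (if i = k then lam - p$i else - (1 / (x$i - x$k)))"
  by (simp add: Lmat_def mat_def)

lemma part1:
  fixes x p :: "real^'n"
  assumes inj: "inj (\<lambda>i. x $ i)"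
  shows "vec 1 \<bullet> (adjugate (mat lam - Lmat x p) *v vec 1) = trace (adjugate (mat lam - Lmat x p))"
proof -
  define M where "M = mat lam - Lmat x p"
  define a where "a = adjugate M"
  have d: "x$i \<noteq> x$k" if "i \<noteq> k" for i k using inj that by (metis injD)
  have key: "(x$i - x$k) * M$i$k = (if i = k then 0 else -1)" for i k
    using d[of i k] unfolding M_def M_entry by simp
  have "(\<Sum>i\<in>UNIV. \<Sum>k\<in>UNIV. (x$i - x$k) * M$i$k * a$k$i)
      = (\<Sum>i\<in>UNIV. x$i * (\<Sum>k\<in>UNIV. M$i$k * a$k$i)) - (\<Sum>k\<in>UNIV. x$k * (\<Sum>i\<in>UNIV. a$k$i * M$i$k))"
  proof -
    have 1: "(\<Sum>i\<in>UNIV. \<Sum>k\<in>UNIV. (x$i - x$k) * M$i$k * a$k$i)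
       = (\<Sum>i\<in>UNIV. \<Sum>k\<in>UNIV. x$i * (M$i$k * a$k$i)) - (\<Sum>i\<in>UNIV. \<Sum>k\<in>UNIV. x$k * (a$k$i * M$i$k))"
      unfolding sum_subtractf[symmetric] by (intro sum.cong refl) (simp add: algebra_simps)
    have 2: "(\<Sum>i\<in>UNIV. \<Sum>k\<in>UNIV. x$k * (a$k$i * M$i$k)) = (\<Sum>k\<in>UNIV. \<Sum>i\<in>UNIV. x$k * (a$k$i * M$i$k))"
      by (rule sum.swap)
    show ?thesis unfolding 1 2 sum_distrib_left ..
  qed
  also have "\<dots> = 0" unfolding a_def adj_R adj_C by simp
  finally have z: "(\<Sum>i\<in>UNIV. \<Sum>k\<in>UNIV. (x$i - x$k) * M$i$k * a$k$i) = 0" .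
  have "(\<Sum>i\<in>UNIV. \<Sum>k\<in>UNIV. (x$i - x$k) * M$i$k * a$k$i)
      = (\<Sum>i\<in>UNIV. \<Sum>k\<in>UNIV. (if i = k then a$k$i else 0) - a$k$i)"
    by (intro sum.cong refl) (simp add: key)
  also have "\<dots> = (\<Sum>i\<in>UNIV. a$i$i) - (\<Sum>i\<in>UNIV. \<Sum>k\<in>UNIV. a$k$i)"
    by (simp add: sum_subtractf)
  finally have "(\<Sum>i\<in>UNIV. a$i$i) = (\<Sum>i\<in>UNIV. \<Sum>k\<in>UNIV. a$k$i)" using z by simp
  moreover have "vec 1 \<bullet> (a *v vec 1) = (\<Sum>k\<in>UNIV. \<Sum>i\<in>UNIV. a$k$i)"
    by (simp add: inner_vec_def matrix_vector_mult_def)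
  moreover have "(\<Sum>i\<in>UNIV. \<Sum>k\<in>UNIV. a$k$i) = (\<Sum>k\<in>UNIV. \<Sum>i\<in>UNIV. a$k$i)" by (rule sum.swap)
  ultimately show ?thesis unfolding trace_def a_def M_def by simp
qed


lemma differentiable_prod':
  fixes f :: "'i \<Rightarrow> 'a::real_normed_vector \<Rightarrow> real"
  assumes "\<And>i. i \<in> I \<Longrightarrow> f i differentiable (at x)"
  shows "(\<lambda>x. \<Prod>i\<in>I. f i x) differentiable (at x)"
proof -
  from assms obtain f' where "\<And>i. i \<in> I \<Longrightarrow> (f i has_derivative f' i) (at x)"
    unfolding differentiable_def by metis
  then show ?thesis unfolding differentiable_def by (blast intro: has_derivative_prod)
qed

lemma det_differentiable:
  fixes A :: "'a::real_normed_vector \<Rightarrow> real^'n^'n"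
  assumes "\<And>r c. (\<lambda>y. A y $ r $ c) differentiable (at x)"
  shows "(\<lambda>y. det (A y)) differentiable (at x)"
  unfolding det_def
  by (intro differentiable_sum ballI differentiable_mult differentiable_const differentiable_prod' assms) auto

lemma det_has_derivative:
  fixes A :: "'a::real_normed_vector \<Rightarrow> real^'n^'n"
  assumes "\<And>r c. ((\<lambda>y. A y $ r $ c) has_derivative A' r c) (at x)"
  shows "((\<lambda>y. det (A y)) has_derivative (\<lambda>h. \<Sum>\<sigma>\<in>{\<sigma>. \<sigma> permutes (UNIV::'n set)}.
      of_int (sign \<sigma>) * (\<Sum>j\<in>UNIV. A' j (\<sigma> j) h * (\<Prod>r\<in>UNIV-{j}. A x $ r $ \<sigma> r)))) (at x)"
  unfolding det_def
  by (intro has_derivative_sum has_derivative_mult_right has_derivative_prod assms)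

lemma Delta_deriv:
  fixes x p :: "real^'n"
  shows "(Delta x p has_field_derivative trace (adjugate (mat lam - Lmat x p))) (at lam)"
proof -
  define L where "L = Lmat x p"
  have ent: "((\<lambda>t. (mat t - L) $ r $ c) has_derivative (\<lambda>h. h * (if r = c then 1 else 0))) (at lam)" for r c
  proof (cases "r = c")
    case True
    then show ?thesis by (simp add: mat_def) (auto intro!: derivative_eq_intros)
  next
    case False
    then show ?thesis by (simp add: mat_def)
  qed
  have D: "((\<lambda>t. det (mat t - L)) has_derivative (\<lambda>h. \<Sum>\<sigma>\<in>{\<sigma>. \<sigma> permutes (UNIV::'n set)}.
      of_int (sign \<sigma>) * (\<Sum>j\<in>UNIV. h * (if j = \<sigma> j then 1 else 0) * (\<Prod>r\<in>UNIV-{j}. (mat lam - L) $ r $ \<sigma> r)))) (at lam)"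
    by (rule det_has_derivative[OF ent])
  have eq: "(\<lambda>h. \<Sum>\<sigma>\<in>{\<sigma>. \<sigma> permutes (UNIV::'n set)}.
      of_int (sign \<sigma>) * (\<Sum>j\<in>UNIV. h * (if j = \<sigma> j then 1 else 0) * (\<Prod>r\<in>UNIV-{j}. (mat lam - L) $ r $ \<sigma> r)))
    = (*) (trace (adjugate (mat lam - L)))"
  proof
    fix h :: real
    have "trace (adjugate (mat lam - L)) = (\<Sum>j\<in>UNIV. \<Sum>\<sigma>\<in>{\<sigma>. \<sigma> permutes (UNIV::'n set)}. of_int (sign \<sigma>) *
       (if \<sigma> j = j then (\<Prod>r\<in>UNIV-{j}. (mat lam - L)$r$\<sigma> r) else 0))"
      unfolding trace_def adj_entry ..
    also have "\<dots> = (\<Sum>\<sigma>\<in>{\<sigma>. \<sigma> permutes (UNIV::'n set)}. \<Sum>j\<in>UNIV. of_int (sign \<sigma>) *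
       (if \<sigma> j = j then (\<Prod>r\<in>UNIV-{j}. (mat lam - L)$r$\<sigma> r) else 0))"
      by (rule sum.swap)
    finally have T: "trace (adjugate (mat lam - L)) = (\<Sum>\<sigma>\<in>{\<sigma>. \<sigma> permutes (UNIV::'n set)}. \<Sum>j\<in>UNIV. of_int (sign \<sigma>) *
       (if \<sigma> j = j then (\<Prod>r\<in>UNIV-{j}. (mat lam - L)$r$\<sigma> r) else 0))" .
    show "(\<Sum>\<sigma>\<in>{\<sigma>. \<sigma> permutes (UNIV::'n set)}.
      of_int (sign \<sigma>) * (\<Sum>j\<in>UNIV. h * (if j = \<sigma> j then 1 else 0) * (\<Prod>r\<in>UNIV-{j}. (mat lam - L) $ r $ \<sigma> r)))
      = trace (adjugate (mat lam - L)) * h"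
      unfolding T sum_distrib_right sum_distrib_left
      by (intro sum.cong refl) auto
  qed
  show ?thesis unfolding has_field_derivative_def Delta_def L_def[symmetric] using D unfolding eq .
qed

lemma Delta'_eq: "Delta' x p lam = trace (adjugate (mat lam - Lmat x p))"
  unfolding Delta'_def by (rule DERIV_imp_deriv[OF Delta_deriv])


lemma trL_val: "trL (y, q) = (\<Sum>i\<in>UNIV. q$i)"
  by (simp add: trL_def trace_def Lmat_def)

lemma pd_x_trL: "pd_x i trL (x, p) = 0"
  unfolding pd_x_def trL_val by simp

lemma mult_if01: "(t::real) * (if b then 1 else 0) = (if b then t else 0)" by simp

lemma pd_p_trL: "pd_p i trL (x, p) = 1"
proof -
  have "(\<lambda>t. trL (x, p + t *\<^sub>R axis i 1)) = (\<lambda>t. (\<Sum>j\<in>UNIV. p$j) + t)"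
    by (rule ext) (simp add: trL_val sum.distrib axis_def mult_if01)
  moreover have "((\<lambda>t. (\<Sum>j\<in>UNIV. p$j) + t) has_real_derivative 1) (at 0)"
    by (auto intro!: derivative_eq_intros)
  ultimately show ?thesis unfolding pd_p_def by (simp add: DERIV_imp_deriv)
qed

lemma bracket_trL: "bracket0 trL g (x, p) = (\<Sum>i\<in>UNIV. pd_x i g (x, p))"
  unfolding bracket0_def pd_x_trL pd_p_trL by simp

lemma dir_deriv:
  fixes g :: "(real^'n) \<times> (real^'n) \<Rightarrow> real"
  assumes "((\<lambda>y. g (y, p)) has_derivative D) (at x)"
  shows "((\<lambda>t. g (x + t *\<^sub>R v, p)) has_real_derivative D v) (at 0)"
proof -
  have l: "linear D" using assms by (rule has_derivative_linear)
  have f: "((\<lambda>t::real. x + t *\<^sub>R v) has_derivative (\<lambda>t. t *\<^sub>R v)) (at 0)"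
    by (auto intro!: derivative_eq_intros)
  have g: "((\<lambda>y. g (y, p)) has_derivative D) (at ((\<lambda>t::real. x + t *\<^sub>R v) 0))"
    using assms by simp
  have "((\<lambda>t. g (x + t *\<^sub>R v, p)) has_derivative (\<lambda>t. D (t *\<^sub>R v))) (at 0)"
    using has_derivative_compose[OF f g] by simp
  moreover have "(\<lambda>t. D (t *\<^sub>R v)) = (*) (D v)"
    using l by (auto simp: linear_scale)
  ultimately show ?thesis unfolding has_field_derivative_def by simp
qed

lemma sum_axis: "(\<Sum>i\<in>UNIV. axis i (1::real)) = (vec 1 :: real^'n)"
  by (simp add: vec_eq_iff sum_component axis_def)

lemma bracket_general:
  fixes g :: "(real^'n) \<times> (real^'n) \<Rightarrow> real"
  assumes dif: "(\<lambda>y. g (y, p)) differentiable (at x)"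
    and tr: "\<And>t. g (x + t *\<^sub>R vec 1, p) = g (x, p) + t * c"
  shows "bracket0 trL g (x, p) = c"
proof -
  obtain D where D: "((\<lambda>y. g (y, p)) has_derivative D) (at x)"
    using dif unfolding differentiable_def by blast
  have l: "linear D" using D by (rule has_derivative_linear)
  have pi: "pd_x i g (x, p) = D (axis i 1)" for i
    unfolding pd_x_def using dir_deriv[OF D, of "axis i 1"] by (simp add: DERIV_imp_deriv)
  have "(\<Sum>i\<in>UNIV. pd_x i g (x, p)) = D (\<Sum>i\<in>UNIV. axis i 1)"
    unfolding pi using l by (simp add: linear_sum)
  also have "\<dots> = D (vec 1)" by (simp add: sum_axis)
  also have "\<dots> = c"
  proof -
    have a: "((\<lambda>t. g (x + t *\<^sub>R vec 1, p)) has_real_derivative D (vec 1)) (at 0)"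
      by (rule dir_deriv[OF D])
    have "((\<lambda>t. g (x + t *\<^sub>R vec 1, p)) has_real_derivative c) (at 0)"
      unfolding tr by (auto intro!: derivative_eq_intros)
    with a show ?thesis by (rule DERIV_unique)
  qed
  finally show ?thesis unfolding bracket_trL .
qed


lemma if_mult0: "(if b then u else 0) * (z::real) = (if b then u*z else 0)" by simp

lemma trace_X: "trace (Xmat y ** A) = (\<Sum>i\<in>UNIV. y$i * A$i$i)"
  by (simp add: trace_def matrix_matrix_mult_def Xmat_def if_mult0)

lemma ent_eq: "(\<chi> k. if k = j then axis i 1 else (mat lam - Lmat y p) $ k) $ r $ c =
  (if r = j then axis i 1 $ c else if r = c then lam - p$r else -(1/(y$r - y$c)))"
  by (simp add: Lmat_def mat_def)

lemma Lmat_shift: "Lmat (x + t *\<^sub>R vec 1) p = Lmat x p"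
  by (simp add: Lmat_def vec_eq_iff)

lemma nth_differentiable: "(\<lambda>y::real^'n. y $ r) differentiable (at x)"
  by (rule bounded_linear_imp_differentiable[OF bounded_linear_vec_nth])

lemma adj_diff:
  fixes x p :: "real^'n"
  assumes inj: "inj (\<lambda>i. x $ i)"
  shows "(\<lambda>y. adjugate (mat lam - Lmat y p) $ i $ j) differentiable (at x)"
proof -
  have "(\<lambda>y. det (\<chi> k. if k = j then axis i 1 else (mat lam - Lmat y p) $ k)) differentiable (at x)"
  proof (rule det_differentiable)
    fix r c
    show "(\<lambda>y. (\<chi> k. if k = j then axis i 1 else (mat lam - Lmat y p) $ k) $ r $ c) differentiable (at x)"
    proof (cases "r = j")
      case True then show ?thesis unfolding ent_eq by simp
    next
      case False
      show ?thesis
      proof (cases "r = c")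
        case True with False show ?thesis unfolding ent_eq by simp
      next
        case rc: False
        have "x $ r - x $ c \<noteq> 0" using inj rc by (auto dest: injD)
        then have "(\<lambda>y. - (1 / (y $ r - y $ c))) differentiable (at x)"
          by (intro differentiable_minus differentiable_divide differentiable_const differentiable_diff nth_differentiable)
        with False rc show ?thesis unfolding ent_eq by simp
      qed
    qed
  qed
  then show ?thesis unfolding adjugate_def by simp
qed

theorem mainTheorem7:
  fixes x p :: "real^'n" and lam :: real
  assumes "inj (\<lambda>i. x $ i)"
  shows "(vec 1 \<bullet> (adjugate (mat lam - Lmat x p) *v vec 1) = trace (adjugate (mat lam - Lmat x p)))
    \<and> (trace (adjugate (mat lam - Lmat x p)) = Delta' x p lam)
    \<and> (bracket0 trL (calG lam) (x, p) = Delta' x p lam)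
    \<and> (bracket0 trL (calE lam) (x, p) = Delta' x p lam)"
proof -
  note P1 = part1[OF assms, of lam p]
  define a where "a = adjugate (mat lam - Lmat x p)"
  have G: "bracket0 trL (calG lam) (x, p) = trace a"
  proof (rule bracket_general)
    show "(\<lambda>y. calG lam (y, p)) differentiable (at x)"
      unfolding calG_def trace_X fst_conv snd_conv
      by (intro differentiable_sum ballI differentiable_mult nth_differentiable adj_diff[OF assms]) auto
    fix t :: real
    show "calG lam (x + t *\<^sub>R vec 1, p) = calG lam (x, p) + t * trace a"
      unfolding calG_def trace_X fst_conv snd_conv Lmat_shift a_def
      by (simp add: trace_def algebra_simps sum.distrib sum_distrib_left)
  qed
  have E: "bracket0 trL (calE lam) (x, p) = trace a"
  proof (rule bracket_general)
    show "(\<lambda>y. calE lam (y, p)) differentiable (at x)"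
    proof -
      have e: "(\<lambda>y. calE lam (y, p)) = (\<lambda>y. \<Sum>i\<in>UNIV. y$i * (\<Sum>j\<in>UNIV. adjugate (mat lam - Lmat y p) $ i $ j))"
        by (simp add: calE_def inner_vec_def matrix_vector_mult_def)
      have "(\<lambda>y. \<Sum>j\<in>UNIV. adjugate (mat lam - Lmat y p) $ i $ j) differentiable (at x)" for i
        by (rule differentiable_sum) (auto intro: adj_diff[OF assms])
      then show ?thesis unfolding e
        by (intro differentiable_sum ballI differentiable_mult nth_differentiable) (auto intro: adj_diff[OF assms])
    qed
    fix t :: real
    have "calE lam (x + t *\<^sub>R vec 1, p) = calE lam (x, p) + t * (vec 1 \<bullet> (a *v vec 1))"
      unfolding calE_def fst_conv snd_conv Lmat_shift a_def inner_vec_def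
      by (simp add: algebra_simps sum.distrib sum_distrib_left)
    then show "calE lam (x + t *\<^sub>R vec 1, p) = calE lam (x, p) + t * trace a"
      using P1 unfolding a_def by simp
  qed
  show ?thesis using P1 G E unfolding a_def Delta'_eq by simp
qed

end
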